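(* For every FOLDS vocabulary $K$, the pre-signature $\Sigma_K$ is a signature.
   Context: Type system. Let $V$ be an infinite set of variables with decidable equality and the unrestricted fresh variable provider ($\varphi(X)=V\setminus X$ for finite $X\subseteq V$, with $\mathsf{fr}(X)\in\varphi(X)$ some choice). Preelements are terms built from variables and function symbols; a pretype is $S(t_1,\ldots,t_n)$ with $S$ a type symbol and $t_i$ preelements; $\mathrm{V}(E)$ denotes the variables of $E$ and $E[\bar a/\bar x]$ simultaneous substitution. A precontext is $\Gamma=x_1:A_1,\ldots,x_n:A_n$ with distinct variables and $\mathrm{V}(A_k)\subseteq\{x_1,\ldots,x_{k-1}\}$; $\mathrm{OV}(\Gamma)=x_1,\ldots,x_n$. A type declaration on standard form is a pair $(\Gamma,S)$ with $\Gamma$ a precontext and $S$ a type symbol. For a set $\Sigma$ of such declarations (each symbol declared once), $\mathcal{J}(\Sigma)$ is the smallest set of judgements closed under: (R1) $\langle\rangle$ context; (R2) from $\Gamma$ context and $A$ type $(\Gamma)$ infer $\Gamma,x:A$ context for $x\notin\mathrm{V}(\Gamma)$; (R3) from $x_1:A_1,\ldots,x_n:A_n$ context infer $x_i:A_i\ (x_1:A_1,\ldots,x_n:A_n)$; (R4) if $(\Gamma,S)\in\Sigma$ with $\Gamma=x_1:A_1,\ldots,x_n:A_n$ and $\bar a:\Delta\to\Gamma$, infer $S(a_1,\ldots,a_n)$ type $(\Delta)$; where $\bar a:\Delta\to\Gamma$ abbreviates the judgements $\Delta$ context, $\Gamma$ context, $a_k:A_k[a_1,\ldots,a_{k-1}/x_1,\ldots,x_{k-1}]\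 (\Delta)$ ($k=1,\ldots,n$). $\Sigma$ is a signature if ($\Gamma$ context)$\in\mathcal{J}(\Sigma)$ for every $(\Gamma,S)\in\Sigma$. FOLDS vocabulary: a finite skeletal category $K$ with no non-identity endomorphisms. Write $A\le B$ iff there is a morphism $B\to A$; this is a well-founded partial order on objects; fix a linear order $\le^*$ extending it. For each object $A$ fix a non-repeating enumeration $x^A_1,\ldots,x^A_{n(A)}$ of all non-identity morphisms with domain $A$ such that $\mathrm{cod}(x^A_i)\le^*\mathrm{cod}(x^A_j)$ whenever $i<j$. The objects of $K$ serve as type symbols and the morphisms of $K$ as variables ($K\subseteq V$). For a sequence $\bar u=u_1,\ldots,u_m$ of morphisms with domain $\mathrm{cod}(v)$ write $\bar u^v=u_1v,\ldots,u_mv$ (composites). By induction on $\le$ define for each object $A$ the precontext $\Gamma_A=x_1:A_1,\ldots,x_n:A_n$ where $n=n(A)$, $x_i=x^A_i$, $C_i=\mathrm{cod}(x_i)$, and $A_i=C_i(\mathrm{OV}(\Gamma_{C_i})^{x_i})$. Then $\Sigma_K=\{(\Gamma_A,A): A \text{ an object of } K\}$. *)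

theory Defs
  imports Main
begin

text \<open>Variables have type 'v (decidable equality is automatic in HOL), function symbols
  type 'f, type symbols type 's.\<close>

datatype ('v, 'f) preelem = Var 'v | Fn 'f "('v, 'f) preelem list"

datatype ('v, 'f, 's) pretype = Ty 's "('v, 'f) preelem list"

type_synonym ('v, 'f, 's) precontext = "('v \<times> ('v, 'f, 's) pretype) list"

fun vars_el :: "('v, 'f) preelem \<Rightarrow> 'v set" where
  "vars_el (Var x) = {x}"
| "vars_el (Fn f ts) = (\<Union>t\<in>set ts. vars_el t)"

fun vars_ty :: "('v, 'f, 's) pretype \<Rightarrow> 'v set" where
  "vars_ty (Ty S ts) = (\<Union>t\<in>set ts. vars_el t)"

definition OV :: "('v, 'f, 's) precontext \<Rightarrow> 'v list" where
  "OV \<Gamma> = map fst \<Gamma>"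

definition vars_ctx :: "('v, 'f, 's) precontext \<Rightarrow> 'v set" where
  "vars_ctx \<Gamma> = set (OV \<Gamma>) \<union> (\<Union>p\<in>set \<Gamma>. vars_ty (snd p))"

definition is_precontext :: "('v, 'f, 's) precontext \<Rightarrow> bool" where
  "is_precontext \<Gamma> \<longleftrightarrow> distinct (OV \<Gamma>) \<and>
     (\<forall>k < length \<Gamma>. vars_ty (snd (\<Gamma> ! k)) \<subseteq> set (take k (OV \<Gamma>)))"

fun subst_el :: "('v \<Rightarrow> ('v, 'f) preelem) \<Rightarrow> ('v, 'f) preelem \<Rightarrow> ('v, 'f) preelem" where
  "subst_el \<sigma> (Var x) = \<sigma> x"
| "subst_el \<sigma> (Fn f ts) = Fn f (map (subst_el \<sigma>) ts)"

fun subst_ty :: "('v \<Rightarrow> ('v, 'f) preelem) \<Rightarrow> ('v, 'f, 's) pretype \<Rightarrow> ('v, 'f, 's) pretype" where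
  "subst_ty \<sigma> (Ty S ts) = Ty S (map (subst_el \<sigma>) ts)"

definition subst_map :: "('v, 'f) preelem list \<Rightarrow> 'v list \<Rightarrow> 'v \<Rightarrow> ('v, 'f) preelem" where
  "subst_map as xs y = (case map_of (zip xs as) y of Some a \<Rightarrow> a | None \<Rightarrow> Var y)"

definition subst :: "('v, 'f, 's) pretype \<Rightarrow> ('v, 'f) preelem list \<Rightarrow> 'v list \<Rightarrow> ('v, 'f, 's) pretype"
  where "subst A as xs = subst_ty (subst_map as xs) A"

datatype ('v, 'f, 's) judgement =
    IsCtx "('v, 'f, 's) precontext"
  | IsType "('v, 'f, 's) pretype" "('v, 'f, 's) precontext"
  | HasType "('v, 'f) preelem" "('v, 'f, 's) pretype" "('v, 'f, 's) precontext"

text \<open>A type declaration on standard form is a pair (Gamma, S).\<close>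

inductive_set J :: "(('v, 'f, 's) precontext \<times> 's) set \<Rightarrow> ('v, 'f, 's) judgement set"
  for \<Sigma> where
  R1: "IsCtx [] \<in> J \<Sigma>"
| R2: "\<lbrakk> IsCtx \<Gamma> \<in> J \<Sigma>; IsType A \<Gamma> \<in> J \<Sigma>; x \<notin> vars_ctx \<Gamma> \<rbrakk>
        \<Longrightarrow> IsCtx (\<Gamma> @ [(x, A)]) \<in> J \<Sigma>"
| R3: "\<lbrakk> IsCtx \<Gamma> \<in> J \<Sigma>; i < length \<Gamma> \<rbrakk>
        \<Longrightarrow> HasType (Var (fst (\<Gamma> ! i))) (snd (\<Gamma> ! i)) \<Gamma> \<in> J \<Sigma>"
| R4: "\<lbrakk> (\<Gamma>, S) \<in> \<Sigma>; IsCtx \<Delta> \<in> J \<Sigma>; IsCtx \<Gamma> \<in> J \<Sigma>; length as = length \<Gamma>;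
        \<forall>k < length \<Gamma>. HasType (as ! k)
             (subst (snd (\<Gamma> ! k)) (take k as) (take k (OV \<Gamma>))) \<Delta> \<in> J \<Sigma> \<rbrakk>
        \<Longrightarrow> IsType (Ty S as) \<Delta> \<in> J \<Sigma>"

definition is_signature :: "(('v, 'f, 's) precontext \<times> 's) set \<Rightarrow> bool" where
  "is_signature \<Sigma> \<longleftrightarrow>
     (\<forall>(\<Gamma>, S) \<in> \<Sigma>. is_precontext \<Gamma>) \<and>
     (\<forall>(\<Gamma>, S) \<in> \<Sigma>. \<forall>(\<Gamma>', S') \<in> \<Sigma>. S = S' \<longrightarrow> \<Gamma> = \<Gamma>') \<and>
     (\<forall>(\<Gamma>, S) \<in> \<Sigma>. IsCtx \<Gamma> \<in> J \<Sigma>)"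

text \<open>A category with object set Ob (type symbols) and morphism set Mor (variables),
  domain/codomain maps, composition cmp g f (= g after f, defined when cd f = dm g)
  and identities idm.\<close>

definition is_category ::
  "'s set \<Rightarrow> 'v set \<Rightarrow> ('v \<Rightarrow> 's) \<Rightarrow> ('v \<Rightarrow> 's) \<Rightarrow> ('v \<Rightarrow> 'v \<Rightarrow> 'v) \<Rightarrow> ('s \<Rightarrow> 'v) \<Rightarrow> bool"
where
  "is_category Ob Mor dm cd cmp idm \<longleftrightarrow>
     (\<forall>f\<in>Mor. dm f \<in> Ob \<and> cd f \<in> Ob) \<and>
     (\<forall>A\<in>Ob. idm A \<in> Mor \<and> dm (idm A) = A \<and> cd (idm A) = A) \<and>
     (\<forall>f\<in>Mor. \<forall>g\<in>Mor. cd f = dm g \<longrightarrow>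
        cmp g f \<in> Mor \<and> dm (cmp g f) = dm f \<and> cd (cmp g f) = cd g) \<and>
     (\<forall>f\<in>Mor. cmp f (idm (dm f)) = f \<and> cmp (idm (cd f)) f = f) \<and>
     (\<forall>f\<in>Mor. \<forall>g\<in>Mor. \<forall>h\<in>Mor. cd f = dm g \<longrightarrow> cd g = dm h \<longrightarrow>
        cmp h (cmp g f) = cmp (cmp h g) f)"

definition is_iso ::
  "'v set \<Rightarrow> ('v \<Rightarrow> 's) \<Rightarrow> ('v \<Rightarrow> 's) \<Rightarrow> ('v \<Rightarrow> 'v \<Rightarrow> 'v) \<Rightarrow> ('s \<Rightarrow> 'v) \<Rightarrow> 'v \<Rightarrow> bool"
where
  "is_iso Mor dm cd cmp idm f \<longleftrightarrow> f \<in> Mor \<and>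
     (\<exists>g\<in>Mor. dm g = cd f \<and> cd g = dm f \<and>
        cmp g f = idm (dm f) \<and> cmp f g = idm (cd f))"

definition folds_vocabulary ::
  "'s set \<Rightarrow> 'v set \<Rightarrow> ('v \<Rightarrow> 's) \<Rightarrow> ('v \<Rightarrow> 's) \<Rightarrow> ('v \<Rightarrow> 'v \<Rightarrow> 'v) \<Rightarrow> ('s \<Rightarrow> 'v) \<Rightarrow> bool"
where
  "folds_vocabulary Ob Mor dm cd cmp idm \<longleftrightarrow>
     is_category Ob Mor dm cd cmp idm \<and>
     finite Ob \<and> finite Mor \<and>
     \<comment> \<open>skeletal\<close>
     (\<forall>f. is_iso Mor dm cd cmp idm f \<longrightarrow> dm f = cd f) \<and>
     \<comment> \<open>no non-identity endomorphisms\<close>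
     (\<forall>f\<in>Mor. dm f = cd f \<longrightarrow> f = idm (dm f))"

definition obj_le :: "'v set \<Rightarrow> ('v \<Rightarrow> 's) \<Rightarrow> ('v \<Rightarrow> 's) \<Rightarrow> 's \<Rightarrow> 's \<Rightarrow> bool" where
  "obj_le Mor dm cd A B \<longleftrightarrow> (\<exists>f\<in>Mor. dm f = B \<and> cd f = A)"

definition admissible_enum ::
  "'s set \<Rightarrow> 'v set \<Rightarrow> ('v \<Rightarrow> 's) \<Rightarrow> ('v \<Rightarrow> 's) \<Rightarrow> ('s \<Rightarrow> 'v)
   \<Rightarrow> ('s \<Rightarrow> 's \<Rightarrow> bool) \<Rightarrow> ('s \<Rightarrow> 'v list) \<Rightarrow> bool"
where
  "admissible_enum Ob Mor dm cd idm lestar enum \<longleftrightarrow>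
     (\<forall>A\<in>Ob. lestar A A) \<and>
     (\<forall>A\<in>Ob. \<forall>B\<in>Ob. lestar A B \<longrightarrow> lestar B A \<longrightarrow> A = B) \<and>
     (\<forall>A\<in>Ob. \<forall>B\<in>Ob. \<forall>C\<in>Ob. lestar A B \<longrightarrow> lestar B C \<longrightarrow> lestar A C) \<and>
     (\<forall>A\<in>Ob. \<forall>B\<in>Ob. lestar A B \<or> lestar B A) \<and>
     (\<forall>A\<in>Ob. \<forall>B\<in>Ob. obj_le Mor dm cd A B \<longrightarrow> lestar A B) \<and>
     (\<forall>A\<in>Ob. distinct (enum A) \<and>
        set (enum A) = {f\<in>Mor. dm f = A \<and> f \<noteq> idm A} \<and>
        (\<forall>i j. i < j \<longrightarrow> j < length (enum A) \<longrightarrow>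
           lestar (cd (enum A ! i)) (cd (enum A ! j))))"

text \<open>Gamma_A = x_1 : A_1, ..., x_n : A_n with x_i = x^A_i, C_i = cd x_i and
  A_i = C_i(OV(Gamma_{C_i})^{x_i}); since OV(Gamma_C) is the enumeration of C, this is the
  explicit (non-recursive) form of the inductive definition. u v denotes cmp u v.\<close>

definition Gamma_K ::
  "('v \<Rightarrow> 's) \<Rightarrow> ('v \<Rightarrow> 'v \<Rightarrow> 'v) \<Rightarrow> ('s \<Rightarrow> 'v list) \<Rightarrow> 's \<Rightarrow> ('v, 'f, 's) precontext"
where
  "Gamma_K cd cmp enum A =
     map (\<lambda>x. (x, Ty (cd x) (map (\<lambda>u. Var (cmp u x)) (enum (cd x))))) (enum A)"

definition Sigma_K ::
  "'s set \<Rightarrow> ('v \<Rightarrow> 's) \<Rightarrow> ('v \<Rightarrow> 'v \<Rightarrow> 'v) \<Rightarrow> ('s \<Rightarrow> 'v list)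
   \<Rightarrow> (('v, 'f, 's) precontext \<times> 's) set"
where
  "Sigma_K Ob cd cmp enum = {(Gamma_K cd cmp enum A, A) | A. A \<in> Ob}"

end

theory Submission
  imports Defs
begin

locale fvoc =
  fixes Ob :: "'s set" and Mor :: "'v set"
    and dm cd :: "'v \<Rightarrow> 's" and cmp :: "'v \<Rightarrow> 'v \<Rightarrow> 'v" and idm :: "'s \<Rightarrow> 'v"
    and lestar :: "'s \<Rightarrow> 's \<Rightarrow> bool" and enum :: "'s \<Rightarrow> 'v list"
  assumes fv: "folds_vocabulary Ob Mor dm cd cmp idm"
    and ae: "admissible_enum Ob Mor dm cd idm lestar enum"
begin

lemma cat: "is_category Ob Mor dm cd cmp idm" using fv unfolding folds_vocabulary_def by simp

lemma mor_ob: "f \<in> Mor \<Longrightarrow> dm f \<in> Ob \<and> cd f \<in> Ob"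
  using cat unfolding is_category_def by simp

lemma idm_facts: "A \<in> Ob \<Longrightarrow> idm A \<in> Mor \<and> dm (idm A) = A \<and> cd (idm A) = A"
  using cat unfolding is_category_def by simp

lemma comp: "f \<in> Mor \<Longrightarrow> g \<in> Mor \<Longrightarrow> cd f = dm g \<Longrightarrow>
   cmp g f \<in> Mor \<and> dm (cmp g f) = dm f \<and> cd (cmp g f) = cd g"
  using cat unfolding is_category_def by simp

lemma assoc: "f \<in> Mor \<Longrightarrow> g \<in> Mor \<Longrightarrow> h \<in> Mor \<Longrightarrow> cd f = dm g \<Longrightarrow> cd g = dm h \<Longrightarrow>
        cmp h (cmp g f) = cmp (cmp h g) f"
  using cat unfolding is_category_def by simp

lemma skel: "is_iso Mor dm cd cmp idm f \<Longrightarrow> dm f = cd f"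
  using fv unfolding folds_vocabulary_def by simp

lemma endo: "f \<in> Mor \<Longrightarrow> dm f = cd f \<Longrightarrow> f = idm (dm f)"
  using fv unfolding folds_vocabulary_def by simp

lemmas aeD = ae[unfolded admissible_enum_def]

lemma ls_antisym: "A \<in> Ob \<Longrightarrow> B \<in> Ob \<Longrightarrow> lestar A B \<Longrightarrow> lestar B A \<Longrightarrow> A = B"
  using aeD[THEN conjunct2, THEN conjunct1] by blast

lemma ls_trans: "A \<in> Ob \<Longrightarrow> B \<in> Ob \<Longrightarrow> C \<in> Ob \<Longrightarrow> lestar A B \<Longrightarrow> lestar B C \<Longrightarrow> lestar A C"
  using aeD[THEN conjunct2, THEN conjunct2, THEN conjunct1] by blast

lemma ls_obj: "A \<in> Ob \<Longrightarrow> B \<in> Ob \<Longrightarrow> obj_le Mor dm cd A B \<Longrightarrow> lestar A B"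
  using aeD[THEN conjunct2, THEN conjunct2, THEN conjunct2, THEN conjunct2, THEN conjunct1] by blast

lemmas aeE = aeD[THEN conjunct2, THEN conjunct2, THEN conjunct2, THEN conjunct2, THEN conjunct2]

lemma en_dist: "A \<in> Ob \<Longrightarrow> distinct (enum A)"
  using aeE by blast

lemma en_set: "A \<in> Ob \<Longrightarrow> set (enum A) = {f\<in>Mor. dm f = A \<and> f \<noteq> idm A}"
  using aeE by blast

lemma en_ord: "A \<in> Ob \<Longrightarrow> i < j \<Longrightarrow> j < length (enum A) \<Longrightarrow>
           lestar (cd (enum A ! i)) (cd (enum A ! j))"
  using aeE by blast

lemma key:
  assumes A: "A \<in> Ob" and k: "k < length (enum A)"
    and u: "u \<in> set (enum (cd (enum A ! k)))"
  shows "\<exists>j<k. enum A ! j = cmp u (enum A ! k)"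
proof -
  define x where "x = enum A ! k"
  define C where "C = cd x"
  have xs: "x \<in> set (enum A)" using k x_def by simp
  hence x: "x \<in> Mor" "dm x = A" "x \<noteq> idm A" using en_set[OF A] by auto
  have C: "C \<in> Ob" using mor_ob[OF x(1)] C_def by simp
  have uu: "u \<in> Mor" "dm u = C" "u \<noteq> idm C" using en_set[OF C] u C_def x_def by auto
  have ux: "cmp u x \<in> Mor" "dm (cmp u x) = A" "cd (cmp u x) = cd u"
    using comp[OF x(1) uu(1)] uu(2) C_def x(2) by auto
  have D: "cd u \<in> Ob" using mor_ob[OF uu(1)] by simp
  have ni: "cmp u x \<noteq> idm A"
  proof
    assume e: "cmp u x = idm A"
    have g: "cmp x u \<in> Mor" "dm (cmp x u) = C" "cd (cmp x u) = C"
      using comp[OF uu(1) x(1)] idm_facts[OF A] e ux C_def uu(2) x(2) by auto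
    have "cmp x u = idm C" using endo[OF g(1)] g by metis
    hence "is_iso Mor dm cd cmp idm x"
      unfolding is_iso_def using x uu e ux idm_facts[OF A] C_def
      by (intro conjI bexI[of _ u]) auto
    hence "dm x = cd x" by (rule skel)
    thus False using endo[OF x(1)] x by metis
  qed
  have "cmp u x \<in> set (enum A)" using en_set[OF A] ux ni by auto
  then obtain j where j: "j < length (enum A)" "enum A ! j = cmp u x"
    by (auto simp: in_set_conv_nth)
  have "j \<noteq> k"
  proof
    assume "j = k"
    hence "cd u = C" using j ux C_def x_def by metis
    thus False using endo[OF uu(1)] uu by metis
  qed
  moreover have "\<not> k < j"
  proof
    assume "k < j"
    hence "lestar C (cd u)" using en_ord[OF A _ j(1)] j(2) ux C_def x_def by metis
    moreover have "lestar (cd u) C"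
      using ls_obj[OF D C] uu unfolding obj_le_def by blast
    ultimately have "cd u = C" using ls_antisym[OF D C] by blast
    thus False using endo[OF uu(1)] uu by metis
  qed
  ultimately have "j < k" by simp
  thus ?thesis using j(2) x_def by blast
qed

lemma ls_refl: "A \<in> Ob \<Longrightarrow> lestar A A"
  using aeD[THEN conjunct1] by blast

lemma fin_Ob: "finite Ob" using fv unfolding folds_vocabulary_def by blast


lemma G_len: "length ((Gamma_K cd cmp enum A :: ('v, 'f, 's) precontext)) = length (enum A)"
  by (simp add: Gamma_K_def)

lemma OV_G: "OV ((Gamma_K cd cmp enum A :: ('v, 'f, 's) precontext)) = enum A"
  by (simp add: Gamma_K_def OV_def comp_def)

lemma G_nth: "k < length (enum A) \<Longrightarrow> (Gamma_K cd cmp enum A :: ('v, 'f, 's) precontext) ! k = (enum A ! k, Ty (cd (enum A ! k))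
     (map (\<lambda>u. Var (cmp u (enum A ! k))) (enum (cd (enum A ! k)))))"
  by (simp add: Gamma_K_def)

lemma vars_sub:
  assumes A: "A \<in> Ob" and k: "k < length (enum A)"
  shows "vars_ty (snd ((Gamma_K cd cmp enum A :: ('v, 'f, 's) precontext) ! k)) \<subseteq> set (take k (enum A))"
proof
  fix y assume "y \<in> vars_ty (snd ((Gamma_K cd cmp enum A :: ('v, 'f, 's) precontext) ! k))"
  moreover have "vars_ty (snd ((Gamma_K cd cmp enum A :: ('v, 'f, 's) precontext) ! k)) = (\<lambda>u. cmp u (enum A ! k)) ` set (enum (cd (enum A ! k)))"
    by (simp add: G_nth[OF k]) force
  ultimately obtain u where u: "u \<in> set (enum (cd (enum A ! k)))" and y: "y = cmp u (enum A ! k)"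
    by auto
  obtain j where j: "j < k" "enum A ! j = y" using key[OF A k u] y by blast
  have "take k (enum A) ! j = y" using j by simp
  moreover have "j < length (take k (enum A))" using j k by simp
  ultimately show "y \<in> set (take k (enum A))" by (metis nth_mem)
qed

lemma precontext: "A \<in> Ob \<Longrightarrow> is_precontext ((Gamma_K cd cmp enum A :: ('v, 'f, 's) precontext))"
  unfolding is_precontext_def OV_G by (simp add: en_dist G_len vars_sub)

lemma notin_take: "distinct xs \<Longrightarrow> k < length xs \<Longrightarrow> xs ! k \<notin> set (take k xs)"
proof
  assume d: "distinct xs" and k: "k < length xs" and "xs ! k \<in> set (take k xs)"
  then obtain i where i: "i < length (take k xs)" "take k xs ! i = xs ! k"
    by (auto simp: in_set_conv_nth)
  hence "xs ! i = xs ! k" "i < k" by auto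
  thus False using d k nth_eq_iff_index_eq by fastforce
qed

lemma fresh:
  assumes A: "A \<in> Ob" and k: "k < length (enum A)"
  shows "enum A ! k \<notin> vars_ctx (take k ((Gamma_K cd cmp enum A :: ('v, 'f, 's) precontext)))"
proof -
  have "vars_ctx (take k ((Gamma_K cd cmp enum A :: ('v, 'f, 's) precontext))) \<subseteq> set (take k (enum A))"
  proof -
    have "set (OV (take k ((Gamma_K cd cmp enum A :: ('v, 'f, 's) precontext)))) = set (take k (enum A))"
    proof -
      have "OV (take k ((Gamma_K cd cmp enum A :: ('v, 'f, 's) precontext) :: ('v, 'f, 's) precontext)) = take k (OV ((Gamma_K cd cmp enum A :: ('v, 'f, 's) precontext) :: ('v, 'f, 's) precontext))"
        unfolding OV_def by (rule take_map[symmetric])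
      thus ?thesis by (simp add: OV_G)
    qed
    moreover have "vars_ty (snd p) \<subseteq> set (take k (enum A))" if p: "p \<in> set (take k ((Gamma_K cd cmp enum A :: ('v, 'f, 's) precontext)))" for p
    proof -
      obtain i where i: "i < length (take k ((Gamma_K cd cmp enum A :: ('v, 'f, 's) precontext)))" "take k ((Gamma_K cd cmp enum A :: ('v, 'f, 's) precontext)) ! i = p"
        using p unfolding in_set_conv_nth by blast
      hence ik: "i < k" "i < length (enum A)" "p = (Gamma_K cd cmp enum A :: ('v, 'f, 's) precontext) ! i" by (auto simp: G_len)
      have "vars_ty (snd p) \<subseteq> set (take i (enum A))" using vars_sub[OF A ik(2)] ik(3) by simp
      also have "\<dots> \<subseteq> set (take k (enum A))" using ik(1) by (simp add: set_take_subset_set_take)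
      finally show ?thesis .
    qed
    ultimately show ?thesis unfolding vars_ctx_def by blast
  qed
  thus ?thesis using notin_take[OF en_dist[OF A] k] by blast
qed

lemma hastype:
  assumes A: "A \<in> Ob" and k: "k < length (enum A)" and xd: "x = enum A ! k"
    and Cd: "C = cd x" and k': "k' < length (enum C)"
    and D: "IsCtx (take k ((Gamma_K cd cmp enum A :: ('v, 'f, 's) precontext) :: ('v, 'f, 's) precontext)) \<in> J (Sigma_K Ob cd cmp enum)"
  shows "(HasType (Var (cmp (enum C ! k') x))
     (subst (snd ((Gamma_K cd cmp enum C :: ('v, 'f, 's) precontext) ! k')) (take k' (map (\<lambda>u. Var (cmp u x)) (enum C))) (take k' (OV ((Gamma_K cd cmp enum C :: ('v, 'f, 's) precontext) :: ('v, 'f, 's) precontext))))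
     (take k ((Gamma_K cd cmp enum A :: ('v, 'f, 's) precontext))) :: ('v, 'f, 's) judgement) \<in> J (Sigma_K Ob cd cmp enum)"
proof -
  define v where "v = enum C ! k'"
  define as :: "('v, 'f) preelem list" where "as = map (\<lambda>u. Var (cmp u x)) (enum C)"
  have xs: "x \<in> set (enum A)" using k xd by simp
  hence x: "x \<in> Mor" "dm x = A" using en_set[OF A] by auto
  have C: "C \<in> Ob" using mor_ob[OF x(1)] Cd by simp
  have vs: "v \<in> set (enum C)" using k' v_def by simp
  hence v: "v \<in> Mor" "dm v = C" using en_set[OF C] by auto
  have vx: "cmp v x \<in> Mor" "dm (cmp v x) = A" "cd (cmp v x) = cd v"
    using comp[OF x(1) v(1)] v(2) Cd x(2) by auto
  obtain i where i: "i < k" "enum A ! i = cmp v x"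
    using key[OF A k, of v] vs xd Cd by blast
  have il: "i < length (take k ((Gamma_K cd cmp enum A :: ('v, 'f, 's) precontext) :: ('v, 'f, 's) precontext))" using i k by (simp add: G_len)
  have R: "(HasType (Var (fst (take k ((Gamma_K cd cmp enum A :: ('v, 'f, 's) precontext) :: ('v, 'f, 's) precontext) ! i))) (snd (take k ((Gamma_K cd cmp enum A :: ('v, 'f, 's) precontext)) ! i)) (take k ((Gamma_K cd cmp enum A :: ('v, 'f, 's) precontext))) :: ('v, 'f, 's) judgement) \<in> J (Sigma_K Ob cd cmp enum)"
    using D il by (rule J.R3)
  have ilen: "i < length (enum A)" using i k by simp
  have e1: "take k ((Gamma_K cd cmp enum A :: ('v, 'f, 's) precontext) :: ('v, 'f, 's) precontext) ! i = (cmp v x, Ty (cd v) (map (\<lambda>w. Var (cmp w (cmp v x))) (enum (cd v))))"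
    using i G_nth[OF ilen] vx by simp
  have sm: "subst_map (take k' as) (take k' (enum C)) (cmp w v) = Var (cmp w (cmp v x))"
    if w: "w \<in> set (enum (cd v))" for w
  proof -
    have cv: "cd v \<in> Ob" using mor_ob[OF v(1)] by simp
    have wm: "w \<in> Mor" "dm w = cd v" using w en_set[OF cv] by auto
    obtain j where j: "j < k'" "enum C ! j = cmp w v"
      using key[OF C k', of w] w v_def by blast
    have "map_of (zip (take k' (enum C)) (take k' as)) (take k' (enum C) ! j) = Some (take k' as ! j)"
      by (rule map_of_zip_nth) (use j k' en_dist[OF C] as_def in auto)
    moreover have "take k' (enum C) ! j = cmp w v" using j by simp
    moreover have "take k' as ! j = Var (cmp (cmp w v) x)" using j k' as_def by simp
    moreover have "cmp (cmp w v) x = cmp w (cmp v x)"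
      using assoc[OF x(1) v(1) wm(1)] v(2) Cd wm(2) by simp
    ultimately show ?thesis unfolding subst_map_def by simp
  qed
  have e2: "subst (snd (((Gamma_K cd cmp enum C :: ('v, 'f, 's) precontext) :: ('v, 'f, 's) precontext) ! k')) (take k' as) (take k' (OV ((Gamma_K cd cmp enum C :: ('v, 'f, 's) precontext) :: ('v, 'f, 's) precontext)))
       = Ty (cd v) (map (\<lambda>w. Var (cmp w (cmp v x))) (enum (cd v)))"
  proof -
    have s: "snd ((Gamma_K cd cmp enum C :: ('v, 'f, 's) precontext) ! k') = Ty (cd v) (map (\<lambda>w. Var (cmp w v)) (enum (cd v)))"
      by (simp add: G_nth[OF k'] v_def)
    show ?thesis unfolding subst_def OV_G s by (simp cong: map_cong add: sm)
  qed
  show ?thesis using R e1 e2 unfolding as_def v_def by simp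
qed

lemma ctx:
  "A \<in> Ob \<Longrightarrow> IsCtx (Gamma_K cd cmp enum A :: ('v, 'f, 's) precontext) \<in> J (Sigma_K Ob cd cmp enum)"
proof (induction A rule: measure_induct_rule[where f="\<lambda>A. card {B\<in>Ob. lestar B A}"])
  case (less A)
  note A = less.prems
  have IHC: "IsCtx (Gamma_K cd cmp enum C :: ('v, 'f, 's) precontext) \<in> J (Sigma_K Ob cd cmp enum)"
    if C: "C \<in> Ob" "lestar C A" "C \<noteq> A" for C
  proof -
    have "{B\<in>Ob. lestar B C} \<subset> {B\<in>Ob. lestar B A}"
    proof
      show "{B\<in>Ob. lestar B C} \<subseteq> {B\<in>Ob. lestar B A}" using ls_trans C A by blast
      have "A \<in> {B\<in>Ob. lestar B A}" using ls_refl A by blast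
      moreover have "A \<notin> {B\<in>Ob. lestar B C}" using ls_antisym[OF A C(1)] C by blast
      ultimately show "{B\<in>Ob. lestar B C} \<noteq> {B\<in>Ob. lestar B A}" by blast
    qed
    moreover have "finite {B\<in>Ob. lestar B A}" using fin_Ob by simp
    ultimately have "card {B\<in>Ob. lestar B C} < card {B\<in>Ob. lestar B A}"
      using psubset_card_mono by blast
    thus ?thesis using less.IH C(1) by blast
  qed
  have main: "IsCtx (take k (Gamma_K cd cmp enum A :: ('v, 'f, 's) precontext)) \<in> J (Sigma_K Ob cd cmp enum)" if "k \<le> length (enum A)" for k
    using that
  proof (induction k)
    case 0 show ?case using J.R1 by simp
  next
    case (Suc k)
    hence k: "k < length (enum A)" by simp
    have D: "IsCtx (take k (Gamma_K cd cmp enum A :: ('v, 'f, 's) precontext)) \<in> J (Sigma_K Ob cd cmp enum)" using Suc by simp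
    define x where "x = enum A ! k"
    define C where "C = cd x"
    have "x \<in> set (enum A)" using k x_def by simp
    hence x: "x \<in> Mor" "dm x = A" "x \<noteq> idm A" using en_set[OF A] by auto
    have C: "C \<in> Ob" using mor_ob[OF x(1)] C_def by simp
    have CA: "lestar C A" using ls_obj[OF C A] x C_def unfolding obj_le_def by blast
    have CnA: "C \<noteq> A"
    proof
      assume "C = A"
      hence "dm x = cd x" using x C_def by simp
      thus False using endo[OF x(1)] x by metis
    qed
    have GCc: "IsCtx (Gamma_K cd cmp enum C :: ('v, 'f, 's) precontext) \<in> J (Sigma_K Ob cd cmp enum)" using IHC[OF C CA CnA] .
    have inS: "((Gamma_K cd cmp enum C :: ('v, 'f, 's) precontext), C) \<in> Sigma_K Ob cd cmp enum" unfolding Sigma_K_def using C by blast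
    have T: "IsType (Ty C (map (\<lambda>u. Var (cmp u x)) (enum C))) (take k (Gamma_K cd cmp enum A :: ('v, 'f, 's) precontext)) \<in> J (Sigma_K Ob cd cmp enum)"
    proof (rule J.R4[OF inS D GCc])
      show "length (map (\<lambda>u. Var (cmp u x)) (enum C)) = length (Gamma_K cd cmp enum C :: ('v, 'f, 's) precontext)" by (simp add: G_len)
      show "\<forall>k'<length (Gamma_K cd cmp enum C :: ('v, 'f, 's) precontext). HasType (map (\<lambda>u. Var (cmp u x)) (enum C) ! k')
        (subst (snd ((Gamma_K cd cmp enum C :: ('v, 'f, 's) precontext) ! k')) (take k' (map (\<lambda>u. Var (cmp u x)) (enum C))) (take k' (OV (Gamma_K cd cmp enum C :: ('v, 'f, 's) precontext))))
        (take k (Gamma_K cd cmp enum A :: ('v, 'f, 's) precontext)) \<in> J (Sigma_K Ob cd cmp enum)"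
      proof (intro allI impI)
        fix k' assume "k' < length (Gamma_K cd cmp enum C :: ('v, 'f, 's) precontext)"
        hence k': "k' < length (enum C)" by (simp add: G_len)
        show "HasType (map (\<lambda>u. Var (cmp u x)) (enum C) ! k')
        (subst (snd ((Gamma_K cd cmp enum C :: ('v, 'f, 's) precontext) ! k')) (take k' (map (\<lambda>u. Var (cmp u x)) (enum C))) (take k' (OV (Gamma_K cd cmp enum C :: ('v, 'f, 's) precontext))))
        (take k (Gamma_K cd cmp enum A :: ('v, 'f, 's) precontext)) \<in> J (Sigma_K Ob cd cmp enum)"
          using hastype[OF A k x_def C_def k' D] k' by simp
      qed
    qed
    have e: "take (Suc k) (Gamma_K cd cmp enum A :: ('v, 'f, 's) precontext) = take k (Gamma_K cd cmp enum A :: ('v, 'f, 's) precontext) @ [(x, Ty C (map (\<lambda>u. Var (cmp u x)) (enum C)))]"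
    proof -
      have "k < length (Gamma_K cd cmp enum A :: ('v, 'f, 's) precontext)" using k by (simp add: G_len)
      hence "take (Suc k) (Gamma_K cd cmp enum A :: ('v, 'f, 's) precontext) = take k (Gamma_K cd cmp enum A :: ('v, 'f, 's) precontext) @ [(Gamma_K cd cmp enum A :: ('v, 'f, 's) precontext) ! k]"
        by (rule take_Suc_conv_app_nth)
      thus ?thesis by (simp add: G_nth[OF k] x_def C_def)
    qed
    show ?case unfolding e using J.R2[OF D T fresh[OF A k, folded x_def]] .
  qed
  have "IsCtx (take (length (enum A)) (Gamma_K cd cmp enum A :: ('v, 'f, 's) precontext)) \<in> J (Sigma_K Ob cd cmp enum)" using main by simp
  thus ?case by (simp add: G_len)
qed

end


theorem mainTheorem8:
  fixes Ob :: "'s set" and Mor :: "'v set"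
    and dm cd :: "'v \<Rightarrow> 's" and cmp :: "'v \<Rightarrow> 'v \<Rightarrow> 'v" and idm :: "'s \<Rightarrow> 'v"
    and lestar :: "'s \<Rightarrow> 's \<Rightarrow> bool" and enum :: "'s \<Rightarrow> 'v list"
  assumes "infinite (UNIV :: 'v set)"
    and "folds_vocabulary Ob Mor dm cd cmp idm"
    and "admissible_enum Ob Mor dm cd idm lestar enum"
  shows "is_signature (Sigma_K Ob cd cmp enum :: (('v, 'f, 's) precontext \<times> 's) set)"
proof -
  interpret fvoc Ob Mor dm cd cmp idm lestar enum
    using assms(2,3) by (unfold_locales)
  show ?thesis unfolding is_signature_def
  proof (intro conjI)
    show "\<forall>(\<Gamma>, S)\<in>(Sigma_K Ob cd cmp enum :: (('v, 'f, 's) precontext \<times> 's) set). is_precontext \<Gamma>"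
      unfolding Sigma_K_def using precontext by blast
    show "\<forall>(\<Gamma>, S)\<in>(Sigma_K Ob cd cmp enum :: (('v, 'f, 's) precontext \<times> 's) set).
          \<forall>(\<Gamma>', S')\<in>(Sigma_K Ob cd cmp enum :: (('v, 'f, 's) precontext \<times> 's) set). S = S' \<longrightarrow> \<Gamma> = \<Gamma>'"
      unfolding Sigma_K_def by blast
    show "\<forall>(\<Gamma>, S)\<in>(Sigma_K Ob cd cmp enum :: (('v, 'f, 's) precontext \<times> 's) set). IsCtx \<Gamma> \<in> J (Sigma_K Ob cd cmp enum)"
    proof (intro ballI)
      fix p assume "p \<in> (Sigma_K Ob cd cmp enum :: (('v, 'f, 's) precontext \<times> 's) set)"
      then obtain A where p: "p = (Gamma_K cd cmp enum A, A)" "A \<in> Ob"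
        unfolding Sigma_K_def by blast
      show "case p of (\<Gamma>, S) \<Rightarrow> IsCtx \<Gamma> \<in> J (Sigma_K Ob cd cmp enum)"
        using ctx[OF p(2)] p(1) by simp
    qed
  qed
qed

end
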